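(* Let $A$ be a set, $\to$ a binary relation on $A$, $\vdash\!\dashv$ a symmetric relation on $A$ with $\sim=(\vdash\!\dashv)^*$, and $>$ a well-founded order on $A$ with $\sim\cdot>\cdot\sim\subseteq>$. If $(A,\to)$ is source decreasing modulo $\sim$ (with respect to $>$), then it is Church–Rosser modulo $\sim$, i.e. $(\leftarrow\cup\to\cup\sim)^*\subseteq\to^*\cdot\sim\cdot\leftarrow^*$.
   Context: Labeled steps: $b\to^{a} c$ means $b\to c$ and $b\sim a$; $b\vdash\!\dashv^{a}c$ means $b\vdash\!\dashv c$ and $b\sim a$; a step $c\leftarrow^a b$ means $b\to^a c$. For $a\in A$, $\Leftrightarrow_{\vee a}^*$ denotes the relation of pairs connected by a finite sequence of steps $\to^{a'}$, $\leftarrow^{a'}$, $\vdash\!\dashv^{a'}$, each with some label $a'<a$. $(A,\to)$ is source decreasing modulo $\sim$ if for all $a,b,c\in A$: (i) if $a\to b$ and $a\to c$ then $(b,c)\in\Leftrightarrow_{\vee a}^*$; (ii) if $a\to b$ and $a\vdash\!\dashv c$ then $(b,c)\in \Leftrightarrow_{\vee a}^*\cdot(\leftarrow^{a})^{=}$ (the last step being either empty or a step $d\leftarrow^a c$). *)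

theory Defs
  imports Main
begin

text \<open>Relations: R is the rewrite relation (b,c) \<in> R meaning b \<rightarrow> c;
  E is the symmetric relation (b,c) \<in> E meaning b \<turnstile>\<stileturn> c;
  sim = E^*; gt is the order, (a,b) \<in> gt meaning a > b.\<close>

definition lab_step :: "'a rel \<Rightarrow> 'a rel \<Rightarrow> 'a \<Rightarrow> 'a rel" where
  "lab_step R sim a = {(b,c). (b,c) \<in> R \<and> (b,a) \<in> sim}"

definition conv_below :: "'a rel \<Rightarrow> 'a rel \<Rightarrow> 'a rel \<Rightarrow> 'a rel \<Rightarrow> 'a \<Rightarrow> 'a rel" where
  "conv_below R E sim gt a =
     ({(b,c). \<exists>a'. (a,a') \<in> gt \<and>
        ((b,c) \<in> lab_step R sim a' \<or> (c,b) \<in> lab_step R sim a' \<or> (b,c) \<in> lab_step E sim a')})\<^sup>*"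

definition source_decreasing_mod :: "'a rel \<Rightarrow> 'a rel \<Rightarrow> 'a rel \<Rightarrow> 'a rel \<Rightarrow> bool" where
  "source_decreasing_mod R E sim gt \<longleftrightarrow>
     (\<forall>a b c. (a,b) \<in> R \<and> (a,c) \<in> R \<longrightarrow> (b,c) \<in> conv_below R E sim gt a) \<and>
     (\<forall>a b c. (a,b) \<in> R \<and> (a,c) \<in> E \<longrightarrow>
        (b,c) \<in> conv_below R E sim gt a O (Id \<union> (lab_step R sim a)\<inverse>))"

definition church_rosser_mod :: "'a rel \<Rightarrow> 'a rel \<Rightarrow> bool" where
  "church_rosser_mod R sim \<longleftrightarrow> (R\<inverse> \<union> R \<union> sim)\<^sup>* \<subseteq> R\<^sup>* O sim O (R\<inverse>)\<^sup>*"

end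

theory Submission
  imports Defs
begin

context
  fixes R E sim gt :: "'a rel"
  assumes symE: "sym E" and simdef: "sim = E\<^sup>*" and wfgt: "wf (gt\<inverse>)"
    and compat: "sim O gt O sim \<subseteq> gt"
    and sd: "source_decreasing_mod R E sim gt"
begin

lemma sim_sym: "(a,b) \<in> sim \<Longrightarrow> (b,a) \<in> sim"
  using symE simdef sym_rtrancl by (metis symD)

lemma sim_refl: "(a,a) \<in> sim" using simdef by simp

lemma E_sim: "(a,b) \<in> E \<Longrightarrow> (a,b) \<in> sim" using simdef by simp

lemma sim_trans: "(a,b) \<in> sim \<Longrightarrow> (b,c) \<in> sim \<Longrightarrow> (a,c) \<in> sim"
  using simdef by simp

lemma J_sym: "(a,b) \<in> R\<^sup>* O sim O (R\<inverse>)\<^sup>* \<Longrightarrow> (b,a) \<in> R\<^sup>* O sim O (R\<inverse>)\<^sup>*"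
proof -
  assume "(a,b) \<in> R\<^sup>* O sim O (R\<inverse>)\<^sup>*"
  then obtain p q where "(a,p) \<in> R\<^sup>*" "(p,q) \<in> sim" "(q,b) \<in> (R\<inverse>)\<^sup>*" by blast
  then have "(b,q) \<in> R\<^sup>*" "(q,p) \<in> sim" "(p,a) \<in> (R\<inverse>)\<^sup>*"
    by (simp_all add: rtrancl_converse sim_sym)
  then show ?thesis by (meson relcompI)
qed

lemma J_refl: "(a,a) \<in> R\<^sup>* O sim O (R\<inverse>)\<^sup>*"
  by (rule relcompI[OF rtrancl_refl relcompI[OF sim_refl rtrancl_refl]])

lemma R_J: "(a,b) \<in> R\<^sup>* \<Longrightarrow> (b,c) \<in> R\<^sup>* O sim O (R\<inverse>)\<^sup>* \<Longrightarrow> (a,c) \<in> R\<^sup>* O sim O (R\<inverse>)\<^sup>*"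
proof -
  assume ab: "(a,b) \<in> R\<^sup>*" and "(b,c) \<in> R\<^sup>* O sim O (R\<inverse>)\<^sup>*"
  then obtain p q where "(b,p) \<in> R\<^sup>*" "(p,q) \<in> sim" "(q,c) \<in> (R\<inverse>)\<^sup>*" by (auto elim!: relcompE)
  moreover have "(a,p) \<in> R\<^sup>*" using ab \<open>(b,p) \<in> R\<^sup>*\<close> by (rule rtrancl_trans)
  ultimately show ?thesis by (meson relcompI)
qed

lemma gt_sim: "(a,a') \<in> gt \<Longrightarrow> (c,a') \<in> sim \<Longrightarrow> (a,c) \<in> gt"
proof -
  assume 1: "(a,a') \<in> gt" and 2: "(c,a') \<in> sim"
  have "(a,c) \<in> sim O gt O sim" using sim_refl[of a] 1 sim_sym[OF 2] by (meson relcompI)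
  then show ?thesis by (rule subsetD[OF compat])
qed

lemma gt_sim2: "(s,s') \<in> sim \<Longrightarrow> (s',u) \<in> gt \<Longrightarrow> (s,u) \<in> gt"
proof -
  assume 1: "(s,s') \<in> sim" and 2: "(s',u) \<in> gt"
  have "(s,u) \<in> sim O gt O sim" using 1 2 sim_refl[of u] by (meson relcompI)
  then show ?thesis by (rule subsetD[OF compat])
qed

lemma transport:
  assumes IH: "\<forall>u t y. (a,u) \<in> gt \<longrightarrow> (u,t) \<in> R \<or> (u,t) \<in> E \<longrightarrow>
      (u,y) \<in> R\<^sup>* O sim O (R\<inverse>)\<^sup>* \<longrightarrow> (t,y) \<in> R\<^sup>* O sim O (R\<inverse>)\<^sup>*"
    and "(b,c) \<in> conv_below R E sim gt a" "(b,y) \<in> R\<^sup>* O sim O (R\<inverse>)\<^sup>*"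
  shows "(c,y) \<in> R\<^sup>* O sim O (R\<inverse>)\<^sup>*"
  using assms(2,3) unfolding conv_below_def
proof (induction rule: rtrancl_induct)
  case base
  then show ?case by simp
next
  case (step c d)
  from step.hyps(2) obtain a' where a': "(a,a') \<in> gt" and
    cs: "(c,d) \<in> lab_step R sim a' \<or> (d,c) \<in> lab_step R sim a' \<or> (c,d) \<in> lab_step E sim a'"
    by auto
  have cy: "(c,y) \<in> R\<^sup>* O sim O (R\<inverse>)\<^sup>*" by (rule step.IH) (rule step.prems)
  from cs show ?case
  proof (elim disjE)
    assume "(c,d) \<in> lab_step R sim a'"
    then have cd: "(c,d) \<in> R" and ca: "(c,a') \<in> sim" unfolding lab_step_def by auto
    have ac: "(a,c) \<in> gt" using gt_sim[OF a' ca] .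
    show ?thesis by (rule IH[rule_format, OF ac _ cy]) (rule disjI1, rule cd)
  next
    assume "(d,c) \<in> lab_step R sim a'"
    then have dc: "(d,c) \<in> R" unfolding lab_step_def by auto
    show ?thesis by (rule R_J[OF r_into_rtrancl[OF dc] cy])
  next
    assume "(c,d) \<in> lab_step E sim a'"
    then have cd: "(c,d) \<in> E" and ca: "(c,a') \<in> sim" unfolding lab_step_def by auto
    have ac: "(a,c) \<in> gt" using gt_sim[OF a' ca] .
    show ?thesis by (rule IH[rule_format, OF ac _ cy]) (rule disjI2, rule cd)
  qed
qed

lemma E1:
  assumes IH: "\<forall>u t y. (s,u) \<in> gt \<longrightarrow> (u,t) \<in> R \<or> (u,t) \<in> E \<longrightarrow>
      (u,y) \<in> R\<^sup>* O sim O (R\<inverse>)\<^sup>* \<longrightarrow> (t,y) \<in> R\<^sup>* O sim O (R\<inverse>)\<^sup>*"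
    and ss: "(s',s) \<in> sim" and st: "(s',t) \<in> E" and sy: "(s',y) \<in> R\<^sup>* O sim O (R\<inverse>)\<^sup>*"
  shows "(t,y) \<in> R\<^sup>* O sim O (R\<inverse>)\<^sup>*"
proof -
  obtain p q where sp: "(s',p) \<in> R\<^sup>*" and pq: "(p,q) \<in> sim" and qy: "(q,y) \<in> (R\<inverse>)\<^sup>*"
    using sy by blast
  from sp show ?thesis
  proof (cases rule: converse_rtranclE)
    case base
    have "(t,s') \<in> sim" using st symE E_sim by (meson symD)
    then have "(t,q) \<in> sim" using pq base sim_trans by blast
    then show ?thesis using qy by blast
  next
    case (step s'')
    have "(s'',t) \<in> conv_below R E sim gt s' O (Id \<union> (lab_step R sim s')\<inverse>)"
      using sd step(1) st unfolding source_decreasing_mod_def by blast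
    then obtain w where sw: "(s'',w) \<in> conv_below R E sim gt s'"
      and wt: "w = t \<or> (t,w) \<in> lab_step R sim s'" by blast
    have IH': "\<forall>u t y. (s',u) \<in> gt \<longrightarrow> (u,t) \<in> R \<or> (u,t) \<in> E \<longrightarrow>
      (u,y) \<in> R\<^sup>* O sim O (R\<inverse>)\<^sup>* \<longrightarrow> (t,y) \<in> R\<^sup>* O sim O (R\<inverse>)\<^sup>*"
      using IH gt_sim2[OF sim_sym[OF ss]] by blast
    have "(s'',y) \<in> R\<^sup>* O sim O (R\<inverse>)\<^sup>*" using step(2) pq qy by blast
    then have "(w,y) \<in> R\<^sup>* O sim O (R\<inverse>)\<^sup>*" using transport[of s' s'' w y, OF IH' sw] by blast
    then show ?thesis using wt R_J unfolding lab_step_def by blast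
  qed
qed

lemma Estar:
  assumes IH: "\<forall>u t y. (s,u) \<in> gt \<longrightarrow> (u,t) \<in> R \<or> (u,t) \<in> E \<longrightarrow>
      (u,y) \<in> R\<^sup>* O sim O (R\<inverse>)\<^sup>* \<longrightarrow> (t,y) \<in> R\<^sup>* O sim O (R\<inverse>)\<^sup>*"
    and "(s',q) \<in> E\<^sup>*" and "(s',s) \<in> sim" and "(s',z) \<in> R\<^sup>* O sim O (R\<inverse>)\<^sup>*"
  shows "(q,z) \<in> R\<^sup>* O sim O (R\<inverse>)\<^sup>*"
  using assms(2,3,4)
proof (induction rule: rtrancl_induct)
  case base
  then show ?case by simp
next
  case (step b c)
  have "(b,s) \<in> sim" using step simdef sim_sym sim_trans by blast
  then show ?case using E1[of s b c z, OF IH] step by blast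
qed

lemma C:
  assumes IH: "\<forall>u t y. (s,u) \<in> gt \<longrightarrow> (u,t) \<in> R \<or> (u,t) \<in> E \<longrightarrow>
      (u,y) \<in> R\<^sup>* O sim O (R\<inverse>)\<^sup>* \<longrightarrow> (t,y) \<in> R\<^sup>* O sim O (R\<inverse>)\<^sup>*"
    and "(s',q) \<in> E\<^sup>*"
  shows "(s',s) \<in> sim \<Longrightarrow> (s',t) \<in> R \<Longrightarrow> (t,z) \<in> R\<^sup>* O sim O (R\<inverse>)\<^sup>* \<Longrightarrow> (q,z) \<in> R\<^sup>* O sim O (R\<inverse>)\<^sup>*"
  using assms(2)
proof (induction arbitrary: t rule: converse_rtrancl_induct)
  case base
  then show ?case using R_J by blast
next
  case (step s' e1)
  have "(t,e1) \<in> conv_below R E sim gt s' O (Id \<union> (lab_step R sim s')\<inverse>)"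
    using sd step.prems(2) step.hyps(1) unfolding source_decreasing_mod_def by blast
  then obtain w where tw: "(t,w) \<in> conv_below R E sim gt s'"
    and we: "w = e1 \<or> (e1,w) \<in> lab_step R sim s'" by blast
  have IH': "\<forall>u t y. (s',u) \<in> gt \<longrightarrow> (u,t) \<in> R \<or> (u,t) \<in> E \<longrightarrow>
      (u,y) \<in> R\<^sup>* O sim O (R\<inverse>)\<^sup>* \<longrightarrow> (t,y) \<in> R\<^sup>* O sim O (R\<inverse>)\<^sup>*"
    using IH gt_sim2[OF sim_sym[OF step.prems(1)]] by blast
  have wz: "(w,z) \<in> R\<^sup>* O sim O (R\<inverse>)\<^sup>*" using transport[of s' t w z, OF IH' tw step.prems(3)] .
  have e1s: "(e1,s) \<in> sim"
    using step.hyps(1) step.prems(1) E_sim sim_sym sim_trans by blast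
  from we show ?case
  proof
    assume "w = e1"
    then show ?thesis using Estar[of s e1 q z, OF IH step.hyps(2) e1s] wz by blast
  next
    assume "(e1,w) \<in> lab_step R sim s'"
    then have "(e1,w) \<in> R" unfolding lab_step_def by auto
    then show ?thesis using step.IH e1s wz by blast
  qed
qed

lemma Qs:
  assumes IH: "\<forall>u t y. (s,u) \<in> gt \<longrightarrow> (u,t) \<in> R \<or> (u,t) \<in> E \<longrightarrow>
      (u,y) \<in> R\<^sup>* O sim O (R\<inverse>)\<^sup>* \<longrightarrow> (t,y) \<in> R\<^sup>* O sim O (R\<inverse>)\<^sup>*"
    and st: "(s,t) \<in> R \<or> (s,t) \<in> E" and sy: "(s,y) \<in> R\<^sup>* O sim O (R\<inverse>)\<^sup>*"
  shows "(t,y) \<in> R\<^sup>* O sim O (R\<inverse>)\<^sup>*"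
  using st
proof
  assume "(s,t) \<in> E"
  then show ?thesis by (rule E1[of s s t y, OF IH sim_refl _ sy])
next
  assume st: "(s,t) \<in> R"
  obtain p q where sp: "(s,p) \<in> R\<^sup>*" and pq: "(p,q) \<in> sim" and qy: "(q,y) \<in> (R\<inverse>)\<^sup>*"
    using sy by blast
  from sp show ?thesis
  proof (cases rule: converse_rtranclE)
    case base
    have "(s,q) \<in> E\<^sup>*" using pq base simdef by simp
    then have qt: "(q,t) \<in> R\<^sup>* O sim O (R\<inverse>)\<^sup>*" by (rule C[of s s q t t, OF IH _ sim_refl st J_refl])
    have yq: "(y,q) \<in> R\<^sup>*" using qy by (simp add: rtrancl_converse)
    show ?thesis by (rule J_sym[OF R_J[OF yq qt]])
  next
    case (step s'')
    have "(s'',t) \<in> conv_below R E sim gt s"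
      using sd step(1) st unfolding source_decreasing_mod_def by blast
    moreover have "(s'',y) \<in> R\<^sup>* O sim O (R\<inverse>)\<^sup>*" using step(2) pq qy by blast
    ultimately show ?thesis by (rule transport[of s s'' t y, OF IH])
  qed
qed

lemma allQ: "(u,t) \<in> R \<or> (u,t) \<in> E \<Longrightarrow> (u,y) \<in> R\<^sup>* O sim O (R\<inverse>)\<^sup>* \<Longrightarrow> (t,y) \<in> R\<^sup>* O sim O (R\<inverse>)\<^sup>*"
proof (induction u arbitrary: t y rule: wf_induct_rule[OF wfgt])
  case (1 x)
  have "\<forall>u t y. (x,u) \<in> gt \<longrightarrow> (u,t) \<in> R \<or> (u,t) \<in> E \<longrightarrow>
      (u,y) \<in> R\<^sup>* O sim O (R\<inverse>)\<^sup>* \<longrightarrow> (t,y) \<in> R\<^sup>* O sim O (R\<inverse>)\<^sup>*"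
  proof (intro allI impI)
    fix u t' y'
    assume a1: "(x,u) \<in> gt" and a2: "(u,t') \<in> R \<or> (u,t') \<in> E" and a3: "(u,y') \<in> R\<^sup>* O sim O (R\<inverse>)\<^sup>*"
    have "(u,x) \<in> gt\<inverse>" using a1 by simp
    then show "(t',y') \<in> R\<^sup>* O sim O (R\<inverse>)\<^sup>*" using a2 a3 by (rule 1(1))
  qed
  then show ?case by (rule Qs[of x t y, OF _ 1(2,3)])
qed

lemma Estar_J: "(a,b) \<in> E\<^sup>* \<Longrightarrow> (a,y) \<in> R\<^sup>* O sim O (R\<inverse>)\<^sup>* \<Longrightarrow> (b,y) \<in> R\<^sup>* O sim O (R\<inverse>)\<^sup>*"
proof (induction rule: rtrancl_induct)
  case base
  then show ?case .
next
  case (step b c)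
  have "(b,y) \<in> R\<^sup>* O sim O (R\<inverse>)\<^sup>*" by (rule step.IH[OF step.prems])
  then show ?case using step.hyps(2) by (intro allQ[of b c y]) simp_all
qed

lemma main: "church_rosser_mod R sim"
  unfolding church_rosser_mod_def
proof
  fix x
  assume "x \<in> (R\<inverse> \<union> R \<union> sim)\<^sup>*"
  then obtain a b where x: "x = (a,b)" and ab: "(a,b) \<in> (R\<inverse> \<union> R \<union> sim)\<^sup>*" by (cases x) auto
  from ab have "(a,b) \<in> R\<^sup>* O sim O (R\<inverse>)\<^sup>*"
  proof (induction rule: converse_rtrancl_induct)
    case base
    show ?case by (rule J_refl)
  next
    case (step a a')
    from step.hyps(1) show ?case
    proof (elim UnE)
      assume "(a,a') \<in> R\<inverse>"
      then have "(a',a) \<in> R" by simp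
      then show ?thesis using step.IH by (intro allQ[of a' a b]) simp_all
    next
      assume aa: "(a,a') \<in> R"
      show ?thesis by (rule R_J[OF r_into_rtrancl[OF aa] step.IH])
    next
      assume "(a,a') \<in> sim"
      then have "(a',a) \<in> sim" by (rule sim_sym)
      then have "(a',a) \<in> E\<^sup>*" using simdef by simp
      then show ?thesis by (rule Estar_J[OF _ step.IH])
    qed
  qed
  then show "x \<in> R\<^sup>* O sim O (R\<inverse>)\<^sup>*" using x by simp
qed

end

theorem corollary3p9:
  fixes R E sim gt :: "'a rel"
  assumes "sym E"
    and "sim = E\<^sup>*"
    and "wf (gt\<inverse>)" and "irrefl gt" and "trans gt"
    and "sim O gt O sim \<subseteq> gt"
    and "source_decreasing_mod R E sim gt"
  shows "church_rosser_mod R sim"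
  using main[OF assms(1,2,3,6,7)] .

end
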